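(* Let $d\ge 2$ and $1\le k\le d$. For $i=1,\dots,k-1$ let $\mathbf W_i\in\mathcal B_i$, and let $\mathbf W_k\in\mathcal B_k$. Put $w_1=(\mathbf W_1,\dots,\mathbf W_{k-1},\mathbf W_k,M_{k+1},\dots,M_d)$ and $w_2=(\mathbf W_1,\dots,\mathbf W_{k-1},M_k,M_{k+1},\dots,M_d)$. Then for all $x\in\mathcal X$, $$|h_{w_1}(x)-h_{w_2}(x)|_2\le \alpha_k\exp\Big(\sum_{i=1}^{k-1}\alpha_i\Big)\,M\,|x|_2 .$$
   Context: Let $m,\delta_1,\dots,\delta_d$ be positive integers, $\delta_0=m$, $R>0$, and $\mathcal X=\{x\in\mathbb R^m:|x|_2\le R\}$ ($|\cdot|_2$ the Euclidean norm). For $1\le j\le d$ fix a matrix $M_j\in\mathbb R^{\delta_j\times\delta_{j-1}}$ with $\|M_j\|_2>0$ ($\|\cdot\|_2$ the spectral norm) and a number $\alpha_j>0$, and let $\mathcal B_j=\{\mathbf W\in\mathbb R^{\delta_j\times\delta_{j-1}}:\|\mathbf W-M_j\|_2\le\alpha_j\|M_j\|_2\}$. Let $\phi$ be an activation (acting on vectors of every relevant dimension, e.g. the entrywise ReLU) that is $1$-Lipschitz with respect to the Euclidean norm and satisfies $\phi(0)=0$, and let $\phi_o$ be either the identity map or the soft-max function on $\mathbb R^{\delta_d}$. For $w=(\mathbf W_1,\dots,\mathbf W_d)$ define $h_w:\mathcal X\to\mathbb R^{\delta_d}$ by $h_w(x)=\phi_o(\mathbf W_d\,\phi(\mathbf W_{d-1}\cdots\phi(\mathbf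 W_1x)\cdots))$. Let $M=\prod_{j=1}^d\|M_j\|_2$. *)

theory Defs
  imports Complex_Main "Jordan_Normal_Form.Matrix"
begin

definition vnorm :: "real vec \<Rightarrow> real" where
  "vnorm v = sqrt (v \<bullet> v)"

definition snorm :: "real mat \<Rightarrow> real" where
  "snorm A = Sup {vnorm (A *\<^sub>v x) | x. x \<in> carrier_vec (dim_col A) \<and> vnorm x \<le> 1}"

definition softmax :: "real vec \<Rightarrow> real vec" where
  "softmax v = vec (dim_vec v) (\<lambda>i. exp (v $ i) / (\<Sum>j<dim_vec v. exp (v $ j)))"

fun hidden :: "(real vec \<Rightarrow> real vec) \<Rightarrow> (nat \<Rightarrow> real mat) \<Rightarrow> nat \<Rightarrow> real vec \<Rightarrow> real vec" where
  "hidden phi w 0 x = x"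
| "hidden phi w (Suc j) x = phi (w (Suc j) *\<^sub>v hidden phi w j x)"

text \<open>The network h_w(x) = phi_o (W_d phi(W_{d-1} ... phi(W_1 x))); weights w j for j = 1..d.\<close>
definition net :: "(real vec \<Rightarrow> real vec) \<Rightarrow> (real vec \<Rightarrow> real vec) \<Rightarrow> nat \<Rightarrow> (nat \<Rightarrow> real mat) \<Rightarrow> real vec \<Rightarrow> real vec" where
  "net phi phio d w x = phio (w d *\<^sub>v hidden phi w (d - 1) x)"

end

theory Submission
  imports Defs "HOL-Analysis.L2_Norm"
begin


lemma cov_bound:
  fixes p c h :: "nat \<Rightarrow> real"
  assumes fin: "finite A" and p0: "\<And>i. i \<in> A \<Longrightarrow> 0 \<le> p i" and p1: "sum p A = 1"
  shows "(\<Sum>i\<in>A. c i * (p i * h i)) - (\<Sum>i\<in>A. c i * p i) * (\<Sum>i\<in>A. p i * h i)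
         \<le> L2_set c A * L2_set h A"
proof -
  define cb where "cb = (\<Sum>i\<in>A. c i * p i)"
  define f where "f i = sqrt (p i) * (c i - cb)" for i
  define g where "g i = sqrt (p i) * h i" for i
  have ple: "p i \<le> 1" if "i \<in> A" for i
    using member_le_sum[of i A p] p0 fin that p1 by auto
  have sq: "sqrt (p i) * sqrt (p i) = p i" if "i \<in> A" for i
    using p0[OF that] by simp
  have "(\<Sum>i\<in>A. p i * (c i - cb) * h i) = (\<Sum>i\<in>A. c i * (p i * h i) - cb * (p i * h i))"
    by (rule sum.cong) (simp_all add: right_diff_distrib left_diff_distrib mult.assoc mult.left_commute)
  also have "\<dots> = (\<Sum>i\<in>A. c i * (p i * h i)) - cb * (\<Sum>i\<in>A. p i * h i)"
    by (simp add: sum_subtractf sum_distrib_left)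
  finally have eq1: "(\<Sum>i\<in>A. c i * (p i * h i)) - cb * (\<Sum>i\<in>A. p i * h i)
        = (\<Sum>i\<in>A. p i * (c i - cb) * h i)" by simp
  have fg: "f i * g i = p i * (c i - cb) * h i" if "i \<in> A" for i
  proof -
    have "f i * g i = (sqrt (p i) * sqrt (p i)) * (c i - cb) * h i"
      unfolding f_def g_def by (simp only: mult.assoc mult.left_commute)
    thus ?thesis using sq[OF that] by simp
  qed
  have "(\<Sum>i\<in>A. c i * (p i * h i)) - cb * (\<Sum>i\<in>A. p i * h i) = (\<Sum>i\<in>A. f i * g i)"
    unfolding eq1 using fg by (intro sum.cong) auto
  also have "\<dots> \<le> (\<Sum>i\<in>A. \<bar>f i\<bar> * \<bar>g i\<bar>)"
    by (rule sum_mono) (metis abs_ge_self abs_mult)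
  also have "\<dots> \<le> L2_set f A * L2_set g A" by (rule L2_set_mult_ineq)
  also have "\<dots> \<le> L2_set c A * L2_set h A"
  proof (rule mult_mono)
    have f2: "(f i)\<^sup>2 = p i * (c i)\<^sup>2 - 2 * cb * (c i * p i) + cb\<^sup>2 * p i" if "i \<in> A" for i
    proof -
      have "(f i)\<^sup>2 = (sqrt (p i))\<^sup>2 * (c i - cb)\<^sup>2" unfolding f_def by (rule power_mult_distrib)
      also have "\<dots> = p i * (c i - cb)\<^sup>2" using p0[OF that] by simp
      finally show ?thesis by (simp add: power2_eq_square algebra_simps)
    qed
    have "(\<Sum>i\<in>A. (f i)\<^sup>2) = (\<Sum>i\<in>A. p i * (c i)\<^sup>2 - 2 * cb * (c i * p i) + cb\<^sup>2 * p i)"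
      using f2 by (rule sum.cong[OF refl])
    also have "\<dots> = (\<Sum>i\<in>A. p i * (c i)\<^sup>2) - 2 * cb * cb + cb\<^sup>2 * sum p A"
      unfolding sum.distrib sum_subtractf sum_distrib_left[symmetric] cb_def ..
    also have "\<dots> \<le> (\<Sum>i\<in>A. p i * (c i)\<^sup>2)" using p1 by (simp add: power2_eq_square)
    also have "\<dots> \<le> (\<Sum>i\<in>A. (c i)\<^sup>2)"
      by (rule sum_mono, rule mult_left_le_one_le) (simp_all add: p0 ple)
    finally show "L2_set f A \<le> L2_set c A" unfolding L2_set_def by simp
    have "(\<Sum>i\<in>A. (g i)\<^sup>2) = (\<Sum>i\<in>A. p i * (h i)\<^sup>2)"
      unfolding g_def using p0 by (intro sum.cong) (simp_all add: power_mult_distrib)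
    also have "\<dots> \<le> (\<Sum>i\<in>A. (h i)\<^sup>2)"
      by (rule sum_mono, rule mult_left_le_one_le) (simp_all add: p0 ple)
    finally show "L2_set g A \<le> L2_set h A" unfolding L2_set_def by simp
  qed auto
  finally show ?thesis unfolding cb_def .
qed

lemma quot_alg:
  fixes S T h e :: real
  assumes "S \<noteq> 0"
  shows "(h * e * S - T * e) / (S ^ Suc (Suc 0)) = e / S * (h - T / S)"
  using assms by (simp add: field_simps power2_eq_square)

lemma sum_cov_alg:
  fixes c p h :: "nat \<Rightarrow> real"
  shows "(\<Sum>i\<in>A. c i * (p i * (h i - P))) = (\<Sum>i\<in>A. c i * (p i * h i)) - (\<Sum>i\<in>A. c i * p i) * P"
proof -
  have "(\<Sum>i\<in>A. c i * (p i * (h i - P))) = (\<Sum>i\<in>A. c i * (p i * h i) - c i * p i * P)"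
    by (intro sum.cong refl) (simp add: algebra_simps)
  also have "\<dots> = (\<Sum>i\<in>A. c i * (p i * h i)) - (\<Sum>i\<in>A. c i * p i) * P"
    by (simp add: sum_subtractf sum_distrib_right)
  finally show ?thesis .
qed

lemma soft_fun_lip:
  fixes a b :: "nat \<Rightarrow> real"
  shows "L2_set (\<lambda>i. exp (a i) / (\<Sum>j<n. exp (a j)) - exp (b i) / (\<Sum>j<n. exp (b j))) {..<n}
         \<le> L2_set (\<lambda>i. a i - b i) {..<n}"
proof -
  define h where "h i = a i - b i" for i
  define c where "c i = exp (a i) / (\<Sum>j<n. exp (a j)) - exp (b i) / (\<Sum>j<n. exp (b j))" for i
  define e where "e t i = exp (b i + t * h i)" for t i
  define S where "S t = (\<Sum>j<n. e t j)" for t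
  define p where "p t i = e t i / S t" for t i
  define \<phi> where "\<phi> t = (\<Sum>i<n. c i * p t i)" for t
  define \<phi>' where "\<phi>' t = (\<Sum>i<n. c i * (p t i * h i)) - (\<Sum>i<n. c i * p t i) * (\<Sum>i<n. p t i * h i)" for t
  show ?thesis
  proof (cases "n = 0")
    case True then show ?thesis by simp
  next
    case False
    have Spos: "S t > 0" for t unfolding S_def e_def using False
      by (intro sum_pos) auto
    have dp: "((\<lambda>t. p t i) has_real_derivative p t i * (h i - (\<Sum>j<n. p t j * h j))) (at t)" for t i
    proof -
      have de: "((\<lambda>t. e t j) has_real_derivative h j * e t j) (at t)" for j
        unfolding e_def by (auto intro!: derivative_eq_intros)
      have dS: "(S has_real_derivative (\<Sum>j<n. h j * e t j)) (at t)"
        unfolding S_def by (auto intro!: DERIV_sum de)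
      have "((\<lambda>t. e t i / S t) has_real_derivative
             (h i * e t i * S t - (\<Sum>j<n. h j * e t j) * e t i) / (S t ^ Suc (Suc 0))) (at t)"
        by (rule DERIV_quotient[OF de dS]) (use Spos[of t] in simp)
      moreover have "(h i * e t i * S t - (\<Sum>j<n. h j * e t j) * e t i) / (S t ^ Suc (Suc 0))
          = p t i * (h i - (\<Sum>j<n. p t j * h j))"
      proof -
        have q: "(\<Sum>j<n. e t j / S t * h j) = (\<Sum>j<n. h j * e t j) / S t"
          unfolding sum_divide_distrib by (intro sum.cong refl) simp
        have "(h i * e t i * S t - (\<Sum>j<n. h j * e t j) * e t i) / (S t ^ Suc (Suc 0))
          = e t i / S t * (h i - (\<Sum>j<n. h j * e t j) / S t)"
          by (rule quot_alg) (use Spos[of t] in simp)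
        then show ?thesis by (simp only: q p_def)
      qed
      ultimately show ?thesis unfolding p_def by simp
    qed
    have dphi: "(\<phi> has_real_derivative \<phi>' t) (at t)" for t
    proof -
      have "(\<phi> has_real_derivative (\<Sum>i<n. c i * (p t i * (h i - (\<Sum>j<n. p t j * h j))))) (at t)"
        unfolding \<phi>_def by (auto intro!: DERIV_sum DERIV_cmult dp)
      moreover have "(\<Sum>i<n. c i * (p t i * (h i - (\<Sum>j<n. p t j * h j)))) = \<phi>' t"
        unfolding \<phi>'_def by (rule sum_cov_alg)
      ultimately show ?thesis by simp
    qed
    have bnd: "\<phi>' t \<le> L2_set c {..<n} * L2_set h {..<n}" for t
      unfolding \<phi>'_def
    proof (rule cov_bound)
      show "\<And>i. i \<in> {..<n} \<Longrightarrow> 0 \<le> p t i" unfolding p_def e_def using Spos[of t]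
        by simp
      show "sum (p t) {..<n} = 1" unfolding p_def S_def using Spos[of t]
        by (simp add: sum_divide_distrib[symmetric] S_def)
    qed simp
    obtain z where "\<phi> 1 - \<phi> 0 = (1 - 0) * \<phi>' z"
      using MVT2[of 0 1 \<phi> \<phi>'] dphi by auto
    hence le1: "\<phi> 1 - \<phi> 0 \<le> L2_set c {..<n} * L2_set h {..<n}" using bnd[of z] by simp
    have p1: "p 1 i = exp (a i) / (\<Sum>j<n. exp (a j))" for i
      unfolding p_def S_def e_def h_def by simp
    have p0: "p 0 i = exp (b i) / (\<Sum>j<n. exp (b j))" for i
      unfolding p_def S_def e_def h_def by simp
    have "\<phi> 1 - \<phi> 0 = (\<Sum>i<n. c i * c i)"
      unfolding \<phi>_def p1 p0 by (simp add: sum_subtractf[symmetric] c_def algebra_simps)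
    also have "\<dots> = (L2_set c {..<n})\<^sup>2"
      unfolding L2_set_def by (simp add: power2_eq_square sum_nonneg)
    finally have "\<phi> 1 - \<phi> 0 = (L2_set c {..<n})\<^sup>2" .
    with le1 have "(L2_set c {..<n})\<^sup>2 \<le> L2_set c {..<n} * L2_set h {..<n}" by simp
    hence "L2_set c {..<n} \<le> L2_set h {..<n}"
      by (metis L2_set_nonneg mult_le_cancel_left_pos power2_eq_square order.order_iff_strict
           order_trans)
    thus ?thesis unfolding c_def h_def .
  qed
qed


lemma vnorm_L2: "vnorm v = L2_set (\<lambda>i. v $ i) {..<dim_vec v}"
  unfolding vnorm_def L2_set_def scalar_prod_def
  by (simp add: power2_eq_square lessThan_atLeast0)

lemma vnorm_nonneg: "0 \<le> vnorm v"
  unfolding vnorm_L2 by simp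

lemma softmax_lip:
  assumes "dim_vec u = dim_vec v"
  shows "vnorm (softmax u - softmax v) \<le> vnorm (u - v)"
proof -
  let ?n = "dim_vec v"
  have "vnorm (softmax u - softmax v) =
    L2_set (\<lambda>i. exp (u $ i) / (\<Sum>j<?n. exp (u $ j)) - exp (v $ i) / (\<Sum>j<?n. exp (v $ j))) {..<?n}"
    unfolding vnorm_L2 using assms by (intro L2_set_cong) (auto simp: softmax_def)
  also have "\<dots> \<le> L2_set (\<lambda>i. u $ i - v $ i) {..<?n}" by (rule soft_fun_lip)
  also have "\<dots> = vnorm (u - v)"
    unfolding vnorm_L2 using assms by (intro L2_set_cong) auto
  finally show ?thesis .
qed

lemma vnorm_tri2:
  assumes "dim_vec a = dim_vec b"
  shows "vnorm a \<le> vnorm (a - b) + vnorm b"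
proof -
  have "vnorm a = L2_set (\<lambda>i. (a - b) $ i + b $ i) {..<dim_vec b}"
    unfolding vnorm_L2 using assms by (intro L2_set_cong) auto
  also have "\<dots> \<le> L2_set (\<lambda>i. (a - b) $ i) {..<dim_vec b} + L2_set (\<lambda>i. b $ i) {..<dim_vec b}"
    by (rule L2_set_triangle_ineq)
  also have "\<dots> = vnorm (a - b) + vnorm b" unfolding vnorm_L2 using assms by simp
  finally show ?thesis .
qed

lemma vnorm_smult: "vnorm (k \<cdot>\<^sub>v w) = \<bar>k\<bar> * vnorm w"
proof -
  have c: "w \<in> carrier_vec (dim_vec w)" by (rule carrier_vec_dim_vec)
  have c2: "k \<cdot>\<^sub>v w \<in> carrier_vec (dim_vec w)" by (rule carrier_vecI) simp
  have "(k \<cdot>\<^sub>v w) \<bullet> (k \<cdot>\<^sub>v w) = k * (w \<bullet> (k \<cdot>\<^sub>v w))"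
    by (rule smult_scalar_prod_distrib[OF c c2])
  also have "w \<bullet> (k \<cdot>\<^sub>v w) = k * (w \<bullet> w)"
    by (rule scalar_prod_smult_distrib[OF c c])
  finally have "(k \<cdot>\<^sub>v w) \<bullet> (k \<cdot>\<^sub>v w) = (k * k) * (w \<bullet> w)" by (simp only: mult.assoc)
  thus ?thesis unfolding vnorm_def by (simp only: real_sqrt_mult real_sqrt_mult_self)
qed

lemma op_bound:
  assumes A: "A \<in> carrier_mat r c" and v: "v \<in> carrier_vec c"
  shows "vnorm (A *\<^sub>v v) \<le> snorm A * vnorm v"
proof (cases "vnorm v = 0")
  case True
  hence "\<forall>i\<in>{..<c}. v $ i = 0" using v unfolding vnorm_L2 by (simp add: L2_set_eq_0_iff)
  hence "v = 0\<^sub>v c" using v by (intro eq_vecI) auto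
  hence "A *\<^sub>v v = 0\<^sub>v r" using A by (intro eq_vecI) (auto simp: scalar_prod_def)
  thus ?thesis using True by (simp add: vnorm_def)
next
  case False
  define S where "S = {vnorm (A *\<^sub>v x) | x. x \<in> carrier_vec (dim_col A) \<and> vnorm x \<le> 1}"
  have bdd: "bdd_above S"
  proof (rule bdd_aboveI)
    fix y assume "y \<in> S"
    then obtain x where x: "x \<in> carrier_vec c" "vnorm x \<le> 1" and y: "y = vnorm (A *\<^sub>v x)"
      unfolding S_def using A by auto
    have "y \<le> (\<Sum>i<r. \<bar>(A *\<^sub>v x) $ i\<bar>)"
      unfolding y vnorm_L2 using A L2_set_le_sum_abs[of "\<lambda>i. (A *\<^sub>v x) $ i" "{..<r}"]
      by (simp del: index_mult_mat_vec)
    also have "\<dots> \<le> (\<Sum>i<r. L2_set (\<lambda>j. row A i $ j) {..<c})"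
    proof (rule sum_mono)
      fix i assume i: "i \<in> {..<r}"
      have "\<bar>(A *\<^sub>v x) $ i\<bar> = \<bar>\<Sum>j<c. row A i $ j * x $ j\<bar>"
        using i A x by (simp add: scalar_prod_def lessThan_atLeast0)
      also have "\<dots> \<le> (\<Sum>j<c. \<bar>row A i $ j\<bar> * \<bar>x $ j\<bar>)"
        by (rule order_trans[OF sum_abs]) (simp add: abs_mult)
      also have "\<dots> \<le> L2_set (\<lambda>j. row A i $ j) {..<c} * L2_set (\<lambda>j. x $ j) {..<c}"
        by (rule L2_set_mult_ineq)
      also have "\<dots> \<le> L2_set (\<lambda>j. row A i $ j) {..<c} * 1"
        using x unfolding vnorm_L2 by (intro mult_left_mono) auto
      finally show "\<bar>(A *\<^sub>v x) $ i\<bar> \<le> L2_set (\<lambda>j. row A i $ j) {..<c}" by simp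
    qed
    finally show "y \<le> (\<Sum>i<r. L2_set (\<lambda>j. row A i $ j) {..<c})" .
  qed
  define s where "s = vnorm v"
  have s: "s > 0" using False vnorm_nonneg[of v] unfolding s_def by auto
  define u where "u = (1 / s) \<cdot>\<^sub>v v"
  have u: "u \<in> carrier_vec c" "vnorm u \<le> 1"
    using v s unfolding u_def by (auto simp: vnorm_smult s_def)
  have "vnorm (A *\<^sub>v u) \<in> S" unfolding S_def using u A by auto
  hence le: "vnorm (A *\<^sub>v u) \<le> snorm A" unfolding snorm_def S_def[symmetric]
    using bdd by (rule cSup_upper)
  have "A *\<^sub>v u = (1 / s) \<cdot>\<^sub>v (A *\<^sub>v v)" unfolding u_def by (rule mult_mat_vec[OF A v])
  hence "vnorm (A *\<^sub>v u) = vnorm (A *\<^sub>v v) / s" using s by (simp add: vnorm_smult)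
  with le s show ?thesis unfolding s_def[symmetric] by (simp add: field_simps)
qed


lemma hidden_dim:
  assumes phi_dim: "\<And>v. dim_vec (phi v) = dim_vec v"
    and wd: "\<And>i. 1 \<le> i \<Longrightarrow> i \<le> j \<Longrightarrow> w i \<in> carrier_mat (\<delta> i) (\<delta> (i - 1))"
    and x: "x \<in> carrier_vec (\<delta> 0)"
  shows "hidden phi w j x \<in> carrier_vec (\<delta> j)"
  using wd
proof (induction j)
  case 0 then show ?case using x by simp
next
  case (Suc j)
  have "w (Suc j) \<in> carrier_mat (\<delta> (Suc j)) (\<delta> j)" using Suc.prems[of "Suc j"] by simp
  then show ?case by (intro carrier_vecI) (simp add: phi_dim)
qed

lemma hidden_cong:
  assumes "\<And>i. 1 \<le> i \<Longrightarrow> i \<le> j \<Longrightarrow> w i = w' i"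
  shows "hidden phi w j x = hidden phi w' j x"
  using assms by (induction j) auto

theorem lemma1:
  fixes m d k :: nat and \<delta> :: "nat \<Rightarrow> nat" and R :: real
    and M W :: "nat \<Rightarrow> real mat" and \<alpha> :: "nat \<Rightarrow> real"
    and \<phi> \<phi>o :: "real vec \<Rightarrow> real vec" and x :: "real vec"
  assumes m_pos: "m > 0"
    and delta0: "\<delta> 0 = m"
    and delta_pos: "\<And>j. 1 \<le> j \<Longrightarrow> j \<le> d \<Longrightarrow> \<delta> j > 0"
    and R_pos: "R > 0"
    and M_dim: "\<And>j. 1 \<le> j \<Longrightarrow> j \<le> d \<Longrightarrow> M j \<in> carrier_mat (\<delta> j) (\<delta> (j - 1))"
    and M_pos: "\<And>j. 1 \<le> j \<Longrightarrow> j \<le> d \<Longrightarrow> snorm (M j) > 0"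
    and alpha_pos: "\<And>j. 1 \<le> j \<Longrightarrow> j \<le> d \<Longrightarrow> \<alpha> j > 0"
    and phi_dim: "\<And>v. dim_vec (\<phi> v) = dim_vec v"
    and phi_lip: "\<And>u v. dim_vec u = dim_vec v \<Longrightarrow> vnorm (\<phi> u - \<phi> v) \<le> vnorm (u - v)"
    and phi_zero: "\<And>n. \<phi> (0\<^sub>v n) = 0\<^sub>v n"
    and phio: "\<phi>o = id \<or> \<phi>o = softmax"
    and d_ge: "d \<ge> 2"
    and k_range: "1 \<le> k" "k \<le> d"
    and W_dim: "\<And>i. 1 \<le> i \<Longrightarrow> i \<le> k \<Longrightarrow> W i \<in> carrier_mat (\<delta> i) (\<delta> (i - 1))"
    and W_ball: "\<And>i. 1 \<le> i \<Longrightarrow> i \<le> k \<Longrightarrow> snorm (W i - M i) \<le> \<alpha> i * snorm (M i)"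
    and x_dim: "x \<in> carrier_vec m"
    and x_R: "vnorm x \<le> R"
  shows "vnorm (net \<phi> \<phi>o d (\<lambda>j. if j \<le> k then W j else M j) x
                - net \<phi> \<phi>o d (\<lambda>j. if j < k then W j else M j) x)
         \<le> \<alpha> k * exp (\<Sum>i=1..k-1. \<alpha> i) * (\<Prod>j=1..d. snorm (M j)) * vnorm x"
  proof -
  obtain k' where kk: "k = Suc k'" using k_range by (cases k) auto
  obtain d' where dd: "d = Suc d'" using d_ge by (cases d) auto
  define w1 where "w1 = (\<lambda>j. if j \<le> k then W j else M j)"
  define w2 where "w2 = (\<lambda>j. if j < k then W j else M j)"
  have x0: "x \<in> carrier_vec (\<delta> 0)" using x_dim delta0 by simp
  have dim1: "w1 i \<in> carrier_mat (\<delta> i) (\<delta> (i - 1))" if "1 \<le> i" "i \<le> d" for i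
    using that W_dim M_dim unfolding w1_def by auto
  have dim2: "w2 i \<in> carrier_mat (\<delta> i) (\<delta> (i - 1))" if "1 \<le> i" "i \<le> d" for i
    using that W_dim M_dim unfolding w2_def by auto
  have hd1: "hidden \<phi> w1 j x \<in> carrier_vec (\<delta> j)" if "j \<le> d" for j
    by (rule hidden_dim[where phi=\<phi> and w=w1 and \<delta>=\<delta> and x=x, OF phi_dim _ x0]) (use dim1 that in auto)
  have hd2: "hidden \<phi> w2 j x \<in> carrier_vec (\<delta> j)" if "j \<le> d" for j
    by (rule hidden_dim[where phi=\<phi> and w=w2 and \<delta>=\<delta> and x=x, OF phi_dim _ x0]) (use dim2 that in auto)
  have snM: "0 \<le> snorm (M j)" if "1 \<le> j" "j \<le> d" for j using M_pos[OF that] by simp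
  have al0: "0 \<le> \<alpha> j" if "1 \<le> j" "j \<le> d" for j using alpha_pos[OF that] by simp
  have phi_norm: "vnorm (\<phi> u) \<le> vnorm u" for u
  proof -
    have c: "u \<in> carrier_vec (dim_vec u)" by (rule carrier_vec_dim_vec)
    have c2: "\<phi> u \<in> carrier_vec (dim_vec u)" by (rule carrier_vecI) (simp add: phi_dim)
    have "vnorm (\<phi> u - \<phi> (0\<^sub>v (dim_vec u))) \<le> vnorm (u - 0\<^sub>v (dim_vec u))"
      by (rule phi_lip) simp
    thus ?thesis unfolding phi_zero minus_zero_vec[OF c] minus_zero_vec[OF c2] .
  qed
  have lip_o: "vnorm (\<phi>o u - \<phi>o v) \<le> vnorm (u - v)" if "dim_vec u = dim_vec v" for u v
    using phio
  proof
    assume "\<phi>o = id" thus ?thesis by simp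
  next
    assume "\<phi>o = softmax" thus ?thesis using softmax_lip[OF that] by simp
  qed
  define hW where "hW j = hidden \<phi> W j x" for j
  have hW1: "hidden \<phi> w1 j x = hW j" if "j \<le> k'" for j
    unfolding hW_def by (rule hidden_cong) (use that kk in \<open>auto simp: w1_def\<close>)
  have hW2: "hidden \<phi> w2 j x = hW j" if "j \<le> k'" for j
    unfolding hW_def by (rule hidden_cong) (use that kk in \<open>auto simp: w2_def\<close>)
  have hWd: "hW j \<in> carrier_vec (\<delta> j)" if "j \<le> k'" for j
    using hd1[of j] hW1[OF that] that kk k_range by simp
  have growth: "vnorm (hW j) \<le> (\<Prod>i=1..j. (1 + \<alpha> i) * snorm (M i)) * vnorm x" if "j \<le> k'" for j
    using that
  proof (induction j)
    case 0 then show ?case by (simp add: hW_def)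
  next
    case (Suc j)
    have jk: "Suc j \<le> k" "Suc j \<le> d" using Suc.prems kk k_range by auto
    define g where "g = hW j"
    have g: "g \<in> carrier_vec (\<delta> j)" unfolding g_def using hWd Suc.prems by simp
    have Wc: "W (Suc j) \<in> carrier_mat (\<delta> (Suc j)) (\<delta> j)" using W_dim[of "Suc j"] jk by simp
    have Mc: "M (Suc j) \<in> carrier_mat (\<delta> (Suc j)) (\<delta> j)" using M_dim[of "Suc j"] jk by simp
    have DMc: "W (Suc j) - M (Suc j) \<in> carrier_mat (\<delta> (Suc j)) (\<delta> j)" using Mc by (rule minus_carrier_mat)
    have "vnorm (hW (Suc j)) \<le> vnorm (W (Suc j) *\<^sub>v g)"
      unfolding hW_def g_def by (simp add: phi_norm)
    also have "\<dots> \<le> vnorm (W (Suc j) *\<^sub>v g - M (Suc j) *\<^sub>v g) + vnorm (M (Suc j) *\<^sub>v g)"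
      by (rule vnorm_tri2) (use Wc Mc in simp)
    also have "W (Suc j) *\<^sub>v g - M (Suc j) *\<^sub>v g = (W (Suc j) - M (Suc j)) *\<^sub>v g"
      by (rule minus_mult_distrib_mat_vec[OF Wc Mc g, symmetric])
    also have "vnorm ((W (Suc j) - M (Suc j)) *\<^sub>v g) + vnorm (M (Suc j) *\<^sub>v g)
       \<le> snorm (W (Suc j) - M (Suc j)) * vnorm g + snorm (M (Suc j)) * vnorm g"
      by (intro add_mono op_bound[OF DMc g] op_bound[OF Mc g])
    also have "\<dots> \<le> \<alpha> (Suc j) * snorm (M (Suc j)) * vnorm g + snorm (M (Suc j)) * vnorm g"
      by (intro add_mono mult_right_mono W_ball vnorm_nonneg) (use jk in auto)
    also have "\<dots> = ((1 + \<alpha> (Suc j)) * snorm (M (Suc j))) * vnorm g" by (simp add: algebra_simps)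
    also have "\<dots> \<le> ((1 + \<alpha> (Suc j)) * snorm (M (Suc j))) * ((\<Prod>i=1..j. (1 + \<alpha> i) * snorm (M i)) * vnorm x)"
      by (intro mult_left_mono) (use Suc jk al0 snM in \<open>auto simp: g_def\<close>)
    also have "\<dots> = (\<Prod>i=1..Suc j. (1 + \<alpha> i) * snorm (M i)) * vnorm x"
      by (simp add: prod.cl_ivl_Suc)
    finally show ?case .
  qed
  define h where "h = hW k'"
  have hc: "h \<in> carrier_vec (\<delta> k')" unfolding h_def using hWd by simp
  define C where "C = \<alpha> k * (\<Prod>i=1..k'. (1 + \<alpha> i)) * vnorm x"
  define Q where "Q j = C * (\<Prod>i=1..j. snorm (M i))" for j
  have C0: "0 \<le> C" unfolding C_def using al0 k_range kk
    by (intro mult_nonneg_nonneg prod_nonneg vnorm_nonneg) auto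
  have QS: "Q (Suc j) = snorm (M (Suc j)) * Q j" for j
    unfolding Q_def by (simp add: prod.cl_ivl_Suc)
  have keyk: "vnorm (\<psi> (W k *\<^sub>v h) - \<psi> (M k *\<^sub>v h)) \<le> Q k"
    if lip: "\<And>u v. dim_vec u = dim_vec v \<Longrightarrow> vnorm (\<psi> u - \<psi> v) \<le> vnorm (u - v)" for \<psi>
  proof -
    have Wc: "W k \<in> carrier_mat (\<delta> k) (\<delta> k')" using W_dim[of k] k_range kk by simp
    have Mc: "M k \<in> carrier_mat (\<delta> k) (\<delta> k')" using M_dim[of k] k_range kk by simp
    have DMc: "W k - M k \<in> carrier_mat (\<delta> k) (\<delta> k')" using Mc by (rule minus_carrier_mat)
    have "vnorm (\<psi> (W k *\<^sub>v h) - \<psi> (M k *\<^sub>v h)) \<le> vnorm (W k *\<^sub>v h - M k *\<^sub>v h)"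
      by (rule lip) (use Wc Mc in simp)
    also have "W k *\<^sub>v h - M k *\<^sub>v h = (W k - M k) *\<^sub>v h"
      by (rule minus_mult_distrib_mat_vec[OF Wc Mc hc, symmetric])
    also have "vnorm ((W k - M k) *\<^sub>v h) \<le> snorm (W k - M k) * vnorm h"
      by (rule op_bound[OF DMc hc])
    also have "\<dots> \<le> (\<alpha> k * snorm (M k)) * vnorm h"
      by (intro mult_right_mono W_ball vnorm_nonneg) (use k_range in auto)
    also have "\<dots> \<le> (\<alpha> k * snorm (M k)) * ((\<Prod>i=1..k'. (1 + \<alpha> i) * snorm (M i)) * vnorm x)"
      by (intro mult_left_mono mult_nonneg_nonneg) (use growth[of k'] k_range al0 snM in \<open>auto simp: h_def\<close>)
    also have "\<dots> = Q k"
    proof -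
      have pd: "(\<Prod>i=1..k'. (1 + \<alpha> i) * snorm (M i)) = (\<Prod>i=1..k'. 1 + \<alpha> i) * (\<Prod>i=1..k'. snorm (M i))"
        by (rule prod.distrib)
      show ?thesis unfolding Q_def C_def kk pd by (simp add: prod.cl_ivl_Suc mult_ac)
    qed
    finally show ?thesis .
  qed
  have hk1: "hidden \<phi> w1 k x = \<phi> (W k *\<^sub>v h)"
    using hW1[of k'] unfolding h_def by (simp add: w1_def kk)
  have hk2: "hidden \<phi> w2 k x = \<phi> (M k *\<^sub>v h)"
    using hW2[of k'] unfolding h_def by (simp add: w2_def kk)
  have diff: "vnorm (hidden \<phi> w1 j x - hidden \<phi> w2 j x) \<le> Q j" if "k \<le> j" "j \<le> d'" for j
    using that
  proof (induction j rule: nat_induct_at_least)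
    case base
    show ?case unfolding hk1 hk2 by (rule keyk[OF phi_lip])
  next
    case (Suc j)
    have jd: "Suc j \<le> d" "1 \<le> Suc j" "j \<le> d" using Suc.prems dd by auto
    have e1: "w1 (Suc j) = M (Suc j)" "w2 (Suc j) = M (Suc j)" using Suc.hyps by (auto simp: w1_def w2_def)
    define a where "a = hidden \<phi> w1 j x"
    define b where "b = hidden \<phi> w2 j x"
    have ac: "a \<in> carrier_vec (\<delta> j)" unfolding a_def using hd1 jd by simp
    have bc: "b \<in> carrier_vec (\<delta> j)" unfolding b_def using hd2 jd by simp
    have Mc: "M (Suc j) \<in> carrier_mat (\<delta> (Suc j)) (\<delta> j)" using M_dim[of "Suc j"] jd by simp
    have "vnorm (hidden \<phi> w1 (Suc j) x - hidden \<phi> w2 (Suc j) x)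
        = vnorm (\<phi> (M (Suc j) *\<^sub>v a) - \<phi> (M (Suc j) *\<^sub>v b))"
      by (simp add: e1 a_def b_def)
    also have "\<dots> \<le> vnorm (M (Suc j) *\<^sub>v a - M (Suc j) *\<^sub>v b)"
      by (rule phi_lip) (use Mc in simp)
    also have "M (Suc j) *\<^sub>v a - M (Suc j) *\<^sub>v b = M (Suc j) *\<^sub>v (a - b)"
      by (rule mult_minus_distrib_mat_vec[OF Mc ac bc, symmetric])
    also have "vnorm (M (Suc j) *\<^sub>v (a - b)) \<le> snorm (M (Suc j)) * vnorm (a - b)"
      by (rule op_bound[OF Mc]) (use ac bc in simp)
    also have "\<dots> \<le> snorm (M (Suc j)) * Q j"
      by (intro mult_left_mono snM) (use Suc jd in \<open>auto simp: a_def b_def\<close>)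
    finally show ?case unfolding QS .
  qed
  have final: "vnorm (net \<phi> \<phi>o d w1 x - net \<phi> \<phi>o d w2 x) \<le> Q d"
  proof (cases "k = d")
    case True
    have "net \<phi> \<phi>o d w1 x = \<phi>o (W k *\<^sub>v h)" "net \<phi> \<phi>o d w2 x = \<phi>o (M k *\<^sub>v h)"
      unfolding net_def using True hW1[of k'] hW2[of k'] kk dd by (simp_all add: w1_def w2_def h_def)
    then show ?thesis using keyk[OF lip_o] True by simp
  next
    case False
    hence kd: "k \<le> d'" using k_range dd by simp
    have e1: "w1 d = M d" "w2 d = M d" using False k_range by (auto simp: w1_def w2_def)
    define a where "a = hidden \<phi> w1 d' x"
    define b where "b = hidden \<phi> w2 d' x"
    have ac: "a \<in> carrier_vec (\<delta> d')" unfolding a_def using hd1 dd by simp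
    have bc: "b \<in> carrier_vec (\<delta> d')" unfolding b_def using hd2 dd by simp
    have Mc: "M d \<in> carrier_mat (\<delta> d) (\<delta> d')" using M_dim[of d] dd by simp
    have "vnorm (net \<phi> \<phi>o d w1 x - net \<phi> \<phi>o d w2 x) = vnorm (\<phi>o (M d *\<^sub>v a) - \<phi>o (M d *\<^sub>v b))"
      unfolding net_def e1 by (simp add: a_def b_def dd)
    also have "\<dots> \<le> vnorm (M d *\<^sub>v a - M d *\<^sub>v b)"
      by (rule lip_o) (use Mc in simp)
    also have "M d *\<^sub>v a - M d *\<^sub>v b = M d *\<^sub>v (a - b)"
      by (rule mult_minus_distrib_mat_vec[OF Mc ac bc, symmetric])
    also have "vnorm (M d *\<^sub>v (a - b)) \<le> snorm (M d) * vnorm (a - b)"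
      by (rule op_bound[OF Mc]) (use ac bc in simp)
    also have "\<dots> \<le> snorm (M d) * Q d'"
      by (intro mult_left_mono snM) (use diff[OF kd] dd in \<open>auto simp: a_def b_def\<close>)
    finally show ?thesis unfolding dd QS .
  qed
  have pe: "(\<Prod>i=1..k'. (1 + \<alpha> i)) \<le> exp (\<Sum>i=1..k'. \<alpha> i)"
    unfolding exp_sum[OF finite_atLeastAtMost]
    by (rule prod_mono) (use al0 kk k_range in auto)
  have P0: "0 \<le> (\<Prod>j=1..d. snorm (M j))" by (rule prod_nonneg) (use snM in auto)
  have "Q d = (\<alpha> k * (\<Prod>i=1..k'. (1 + \<alpha> i))) * ((\<Prod>j=1..d. snorm (M j)) * vnorm x)"
    unfolding Q_def C_def by (simp only: mult_ac)
  also have "\<dots> \<le> (\<alpha> k * exp (\<Sum>i=1..k'. \<alpha> i)) * ((\<Prod>j=1..d. snorm (M j)) * vnorm x)"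
    by (intro mult_right_mono mult_left_mono pe mult_nonneg_nonneg P0 vnorm_nonneg al0)
       (use k_range in auto)
  also have "\<dots> = \<alpha> k * exp (\<Sum>i=1..k'. \<alpha> i) * (\<Prod>j=1..d. snorm (M j)) * vnorm x"
    by (simp only: mult_ac)
  finally have "Q d \<le> \<alpha> k * exp (\<Sum>i=1..k'. \<alpha> i) * (\<Prod>j=1..d. snorm (M j)) * vnorm x" .
  with final show ?thesis unfolding w1_def w2_def kk by simp
qed

end
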